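(* Fix $x_0$, $\tau\in(0,1)$, $v\in B(0,\rho_{\max})$. There exist, for each $i\in\{2,\dots,T\}$, a finite set $\mathcal{L}_i$ of sequences of non-negative integers of length $i-1$ and finite positive constants $\beta_i^{(j_1,\dots,j_{i-1})}(x_0)$, depending on $x_0$ and $(j_1,\dots,j_{i-1})$ but not on $\epsilon$, the perturbed control $u^\epsilon$, or the observations, such that for every nominal control $u\in U$ left continuous at $\tau$, every sequence of observations $(y_1,\dots,y_T)$, every $\epsilon\in[0,\tau)$, every $i\in\{2,\dots,T\}$ and every $t\in[i-1,i]$, $$\|\Psi_i^\epsilon(t)\|_2\le\sum_{(j_1,\dots,j_{i-1})\in\mathcal{L}_i}\beta_i^{(j_1,\dots,j_{i-1})}(x_0)\prod_{m=1}^{i-1}\|y_m\|_2^{j_m}.$$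
   Context: Fix positive integers $T,m,n_x,n_y$ and $\rho_{\max}\in(0,\infty)$; $B(0,\rho_{\max})$ is the closed Euclidean ball of radius $\rho_{\max}$ in $\mathbb{R}^m$; $U$ is the set of piecewise continuous $u:[0,T]\to\mathbb{R}^m$ with $\|u(t)\|_2\le\rho_{\max}$ for all $t$. $f:\mathbb{R}^{n_x}\times\mathbb{R}^m\to\mathbb{R}^{n_x}$ is continuously differentiable and there is $K_1\in[1,\infty)$ with $\|f(x',u')-f(x'',u'')\|_2\le K_1(\|x'-x''\|_2+\|u'-u''\|_2)$ for all $x',x''$ and $u',u''\in B(0,\rho_{\max})$. $g:\mathbb{R}^{n_x}\times\mathbb{R}^{n_y}\to\mathbb{R}^{n_x}$ is continuous and differentiable in its first argument, and there are $K_2,\dots,K_5\ge0$ and positive integers $L_1,L_2$ such that for all $x,y$ both $\|g(x,y)\|_2$ and $\|\frac{\partial}{\partial x}g(x,y)\|_2$ are at most $K_2+K_3\|x\|_2^{L_1}+K_4\|y\|_2^{L_2}+K_5\|x\|_2^{L_1}\|y\|_2^{L_2}$. For a control $w\in U$ the hybrid trajectory from $x_0$ is: $x_1$ on $[0,1]$ solves $\dot x_1=f(x_1,w)$, $x_1(0)=x_0$; for $i=2,\dots,T$, $x_i$ on $[i-1,i]$ solves $\dot x_i=f(x_i,w)$ with $x_i(i-1)=g(x_{i-1}(i-1),y_{i-1})$. Perturbed control: for $\epsilon\in[0,\tau]$, $u^\epsilon(t)=v$ if $t\in(\tau-\epsilon,\tau]$ and $u^\epsilon(t)=u(t)$ otherwise;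 $x_i^\epsilon$ are the modes of the trajectory under $u^\epsilon$. For $\epsilon\in[0,\tau)$, $\Psi_1^\epsilon$ is the solution on $[\tau-\epsilon,1]$ of $\dot\Psi_1^\epsilon=\frac{\partial}{\partial x}f(x_1^\epsilon,u^\epsilon)\Psi_1^\epsilon$ with $\Psi_1^\epsilon(\tau-\epsilon)=f(x_1^\epsilon(\tau-\epsilon),v)-f(x_1^\epsilon(\tau-\epsilon),u^\epsilon(\tau-\epsilon))$, and for $i\ge2$, $\Psi_i^\epsilon$ is the solution on $[i-1,i]$ of $\dot\Psi_i^\epsilon=\frac{\partial}{\partial x}f(x_i^\epsilon,u^\epsilon)\Psi_i^\epsilon$ with $\Psi_i^\epsilon(i-1)=\frac{\partial}{\partial x}g(x_{i-1}^\epsilon(i-1),y_{i-1})\Psi_{i-1}^\epsilon(i-1)$. (These are the pieces of the right derivative $\frac{\partial_+}{\partial\epsilon}x^\epsilon(t)$.) *)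

theory Defs
  imports "HOL-Analysis.Analysis"
begin

definition pw_continuous_on :: "real \<Rightarrow> real \<Rightarrow> (real \<Rightarrow> 'a::topological_space) \<Rightarrow> bool" where
  "pw_continuous_on a b u \<longleftrightarrow>
     (\<exists>S. finite S \<and> continuous_on ({a..b} - S) u \<and>
        (\<forall>s\<in>S. (a < s \<longrightarrow> (\<exists>l. (u \<longlongrightarrow> l) (at_left s))) \<and>
                (s < b \<longrightarrow> (\<exists>l. (u \<longlongrightarrow> l) (at_right s)))))"

definition admissible :: "nat \<Rightarrow> real \<Rightarrow> (real \<Rightarrow> 'u::real_normed_vector) \<Rightarrow> bool" where
  "admissible T \<rho> u \<longleftrightarrow> pw_continuous_on 0 (real T) u \<and> (\<forall>t\<in>{0..real T}. norm (u t) \<le> \<rho>)"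

definition pert_ctrl :: "(real \<Rightarrow> 'u) \<Rightarrow> 'u \<Rightarrow> real \<Rightarrow> real \<Rightarrow> real \<Rightarrow> 'u" where
  "pert_ctrl u v \<tau> \<epsilon> = (\<lambda>t. if \<tau> - \<epsilon> < t \<and> t \<le> \<tau> then v else u t)"

text \<open>xs i is the i-th mode (on [i-1,i]) of the hybrid trajectory from x0 under control w
  and observations y; the ODEs are understood in integral (Caratheodory) form.\<close>
definition hybrid_traj ::
  "nat \<Rightarrow> ('x::real_normed_vector \<Rightarrow> 'u \<Rightarrow> 'x) \<Rightarrow> ('x \<Rightarrow> 'y \<Rightarrow> 'x) \<Rightarrow> 'x \<Rightarrow> (nat \<Rightarrow> 'y)
    \<Rightarrow> (real \<Rightarrow> 'u) \<Rightarrow> (nat \<Rightarrow> real \<Rightarrow> 'x) \<Rightarrow> bool" where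
  "hybrid_traj T f g x0 y w xs \<longleftrightarrow>
     (\<forall>i\<in>{1..T}. \<forall>t\<in>{real i - 1..real i}.
        ((\<lambda>s. f (xs i s) (w s)) has_integral
           (xs i t - (if i = 1 then x0 else g (xs (i - 1) (real i - 1)) (y (i - 1)))))
        {real i - 1..t})"

text \<open>The variational pieces Psi_i^eps for the control w = u^eps along the trajectory xs.
  fx x u is the partial derivative of f in x, gx x y that of g in x.\<close>
definition psi_sys ::
  "nat \<Rightarrow> ('x::real_normed_vector \<Rightarrow> 'u \<Rightarrow> 'x) \<Rightarrow> ('x \<Rightarrow> 'u \<Rightarrow> 'x \<Rightarrow>\<^sub>L 'x) \<Rightarrow> ('x \<Rightarrow> 'y \<Rightarrow> 'x \<Rightarrow>\<^sub>L 'x)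
    \<Rightarrow> (nat \<Rightarrow> 'y) \<Rightarrow> 'u \<Rightarrow> real \<Rightarrow> real \<Rightarrow> (real \<Rightarrow> 'u) \<Rightarrow> (nat \<Rightarrow> real \<Rightarrow> 'x)
    \<Rightarrow> (nat \<Rightarrow> real \<Rightarrow> 'x) \<Rightarrow> bool" where
  "psi_sys T f fx gx y v \<tau> \<epsilon> w xs Ps \<longleftrightarrow>
     (\<forall>t\<in>{\<tau> - \<epsilon>..1}.
        ((\<lambda>s. fx (xs 1 s) (w s) (Ps 1 s)) has_integral
           (Ps 1 t - (f (xs 1 (\<tau> - \<epsilon>)) v - f (xs 1 (\<tau> - \<epsilon>)) (w (\<tau> - \<epsilon>)))))
        {\<tau> - \<epsilon>..t}) \<and>
     (\<forall>i\<in>{2..T}. \<forall>t\<in>{real i - 1..real i}.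
        ((\<lambda>s. fx (xs i s) (w s) (Ps i s)) has_integral
           (Ps i t - gx (xs (i - 1) (real i - 1)) (y (i - 1)) (Ps (i - 1) (real i - 1))))
        {real i - 1..t})"

end

theory Submission
  imports Defs
begin


lemma gronwall_int:
  fixes \<phi> h :: "real \<Rightarrow> 'a::banach" and \<phi>0 :: 'a
  assumes ab: "a \<le> b" and K: "K \<ge> 0" and c: "c \<ge> 0"
    and hi: "\<And>t. t \<in> {a..b} \<Longrightarrow> (h has_integral (\<phi> t - \<phi>0)) {a..t}"
    and hb: "\<And>s. s \<in> {a..b} \<Longrightarrow> norm (h s) \<le> K * norm (\<phi> s) + c"
    and t: "t \<in> {a..b}"
  shows "norm (\<phi> t) \<le> (norm \<phi>0 + c * (b - a)) * exp (K * (t - a))"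
proof -
  define A where "A = norm \<phi>0 + c * (b - a)"
  have A0: "A \<ge> 0" using ab c by (simp add: A_def)
  have hint: "h integrable_on {a..b}" using hi[of b] ab by (auto intro: has_integral_integrable)
  have phieq: "\<phi> s = \<phi>0 + integral {a..s} h" if "s \<in> {a..b}" for s
    using hi[OF that] by (simp add: integral_unique)
  have contI: "continuous_on {a..b} (\<lambda>s. integral {a..s} h)"
    by (rule indefinite_integral_continuous_1[OF hint])
  have cphi: "continuous_on {a..b} \<phi>"
  proof -
    have "continuous_on {a..b} (\<lambda>s. \<phi>0 + integral {a..s} h)"
      by (intro continuous_intros contI)
    then show ?thesis using continuous_on_cong[of "{a..b}" "{a..b}" \<phi> "\<lambda>s. \<phi>0 + integral {a..s} h"] phieq by auto
  qed
  have cn: "continuous_on {a..b} (\<lambda>s. norm (\<phi> s))" by (intro continuous_intros cphi)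
  define \<Phi> where "\<Phi> s = integral {a..s} (\<lambda>s. norm (\<phi> s))" for s
  have hsub: "h integrable_on {a..s}" if "s \<in> {a..b}" for s
    using hi[OF that] by blast
  have nsub: "(\<lambda>s. norm (\<phi> s)) integrable_on {a..s}" if "s \<in> {a..b}" for s
    using cn that by (meson atLeastAtMost_iff atLeastatMost_subset_iff integrable_continuous_interval continuous_on_subset order_refl)
  have key: "norm (\<phi> s) \<le> A + K * \<Phi> s" if s: "s \<in> {a..b}" for s
  proof -
    have i1: "(\<lambda>r. K * norm (\<phi> r) + c) integrable_on {a..s}"
      using nsub[OF s] by (intro integrable_add integrable_on_mult_right) auto
    have "norm (integral {a..s} h) \<le> integral {a..s} (\<lambda>r. K * norm (\<phi> r) + c)"
      by (rule integral_norm_bound_integral[OF hsub[OF s] i1]) (use hb s in auto)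
    also have "\<dots> = K * \<Phi> s + c * (s - a)"
    proof -
      have "integral {a..s} (\<lambda>r. K * norm (\<phi> r) + c) = integral {a..s} (\<lambda>r. K * norm (\<phi> r)) + integral {a..s} (\<lambda>r. c)"
        using nsub[OF s] by (intro integral_add integrable_on_mult_right) auto
      then show ?thesis using s by (simp add: \<Phi>_def)
    qed
    also have "\<dots> \<le> K * \<Phi> s + c * (b - a)" using s c by (auto intro: mult_left_mono)
    finally have "norm (integral {a..s} h) \<le> K * \<Phi> s + c * (b - a)" .
    then show ?thesis using phieq[OF s] norm_triangle_ineq[of \<phi>0 "integral {a..s} h"]
      by (simp add: A_def)
  qed
  define G where "G s = exp (- K * (s - a)) * (A + K * \<Phi> s)" for s
  define G' where "G' s = exp (- K * (s - a)) * (- K * (A + K * \<Phi> s) + K * norm (\<phi> s))" for s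
  have dG: "(G has_real_derivative G' s) (at s within {a..t})" if s: "s \<in> {a..t}" for s
  proof -
    have sab: "s \<in> {a..b}" using s t by auto
    have d\<Phi>: "(\<Phi> has_real_derivative norm (\<phi> s)) (at s within {a..b})"
      unfolding \<Phi>_def by (rule integral_has_real_derivative[OF cn sab])
    have d\<Phi>': "(\<Phi> has_real_derivative norm (\<phi> s)) (at s within {a..t})"
      by (rule DERIV_subset[OF d\<Phi>]) (use t in auto)
    have e: "((\<lambda>s. exp (- K * (s - a))) has_real_derivative exp (- K * (s - a)) * (- K)) (at s within {a..t})"
      by (auto intro!: derivative_eq_intros)
    have p: "((\<lambda>s. A + K * \<Phi> s) has_real_derivative 0 + K * norm (\<phi> s)) (at s within {a..t})"
      by (rule DERIV_add[OF DERIV_const DERIV_cmult[OF d\<Phi>']])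
    have "((\<lambda>s. exp (- K * (s - a)) * (A + K * \<Phi> s)) has_real_derivative
       exp (- K * (s - a)) * (- K) * (A + K * \<Phi> s) + (0 + K * norm (\<phi> s)) * exp (- K * (s - a))) (at s within {a..t})"
      by (rule DERIV_mult[OF e p])
    then show ?thesis unfolding G_def G'_def by (simp add: algebra_simps)
  qed
  have G'le: "G' s \<le> 0" if s: "s \<in> {a..t}" for s
  proof -
    have "norm (\<phi> s) \<le> A + K * \<Phi> s" using key s t by auto
    then have "- K * (A + K * \<Phi> s) + K * norm (\<phi> s) \<le> 0" using K
      using mult_left_mono[of "norm (\<phi> s)" "A + K * \<Phi> s" K] by (simp add: algebra_simps)
    then show ?thesis unfolding G'_def by (intro mult_nonneg_nonpos) auto
  qed
  have at: "a \<le> t" using t by auto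
  have "(G' has_integral (G t - G a)) {a..t}"
    by (rule fundamental_theorem_of_calculus[OF at]) (use dG in \<open>auto simp: has_real_derivative_iff_has_vector_derivative\<close>)
  then have "G t - G a \<le> 0"
    using has_integral_le[of G' "G t - G a" "{a..t}" "\<lambda>_. 0" 0] G'le by auto
  moreover have "G a = A" by (simp add: G_def \<Phi>_def)
  ultimately have "G t \<le> A" by simp
  then have "exp (- K * (t - a)) * (A + K * \<Phi> t) \<le> A" by (simp add: G_def)
  have "A + K * \<Phi> t \<le> A * exp (K * (t - a))"
  proof -
    have "exp (K * (t - a)) * (exp (- K * (t - a)) * (A + K * \<Phi> t)) \<le> exp (K * (t - a)) * A"
      by (rule mult_left_mono[OF \<open>exp (- K * (t - a)) * (A + K * \<Phi> t) \<le> A\<close>]) simp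
    moreover have "exp (K * (t - a)) * exp (- K * (t - a)) = 1"
      by (simp add: exp_minus[symmetric] exp_add[symmetric])
    ultimately show ?thesis by (metis mult.assoc mult.commute mult_1)
  qed
  then show ?thesis using key[OF t] by (simp add: A_def)
qed



lemma deriv_lip_bound:
  fixes F :: "'a::real_normed_vector \<Rightarrow> 'b::real_normed_vector"
  assumes d: "(F has_derivative D) (at x)"
    and lip: "\<And>z. norm (F z - F x) \<le> K * norm (z - x)"
  shows "norm (D h) \<le> K * norm h"
proof (cases "h = 0")
  case True
  have "bounded_linear D" using d by (simp add: has_derivative_at_alt)
  then have "D 0 = 0" by (simp add: linear_simps)
  then show ?thesis using True by simp
next
  case False
  have bl: "bounded_linear D" using d by (simp add: has_derivative_at_alt)
  have hp: "norm h > 0" using False by simp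
  have "norm (D h) \<le> (K + e) * norm h" if e: "e > 0" for e
  proof -
    obtain \<delta> where \<delta>: "\<delta> > 0" and H: "\<And>y. norm (y - x) < \<delta> \<Longrightarrow> norm (F y - F x - D (y - x)) \<le> e * norm (y - x)"
      using d e unfolding has_derivative_at_alt by blast
    define s where "s = \<delta> / (2 * norm h)"
    have s0: "s > 0" using \<delta> hp by (simp add: s_def)
    have ns: "norm ((x + s *\<^sub>R h) - x) = s * norm h" using s0 by simp
    have "s * norm h < \<delta>" using \<delta> hp by (simp add: s_def)
    then have "norm (F (x + s *\<^sub>R h) - F x - D (s *\<^sub>R h)) \<le> e * (s * norm h)"
      using H[of "x + s *\<^sub>R h"] ns s0 by (simp add: abs_of_pos)
    moreover have "norm (F (x + s *\<^sub>R h) - F x) \<le> K * (s * norm h)"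
      using lip[of "x + s *\<^sub>R h"] ns s0 by (simp add: abs_of_pos)
    moreover have "D (s *\<^sub>R h) = s *\<^sub>R D h" using bl by (simp add: linear_simps)
    ultimately have "norm (s *\<^sub>R D h) \<le> K * (s * norm h) + e * (s * norm h)"
      using norm_triangle_ineq2[of "D (s *\<^sub>R h)" "F (x + s *\<^sub>R h) - F x"]
        norm_minus_commute[of "D (s *\<^sub>R h)" "F (x + s *\<^sub>R h) - F x"]
      by (simp add: algebra_simps)
    then have "s * norm (D h) \<le> s * ((K + e) * norm h)" using s0 by (simp add: algebra_simps)
    then show ?thesis using s0 by simp
  qed
  then have "norm (D h) \<le> K * norm h + e" if "e > 0" for e
    using that hp by (smt (verit) \<open>\<And>e. e > 0 \<Longrightarrow> _\<close>[of "e / norm h"] divide_pos_pos nonzero_eq_divide_eq distrib_right)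
  then show ?thesis by (rule field_le_epsilon)
qed


lemma prod_lemma:
  fixes a :: "nat \<Rightarrow> real"
  assumes a1: "\<And>m. a m \<ge> 1" and i: "i \<ge> 1"
  shows "(\<Prod>m=1..i-1. a m ^ N) ^ (L1+1) * a i ^ L2 \<le> (\<Prod>m=1..i. a m ^ (N*(L1+1)+L2))"
proof -
  obtain k where k: "i = Suc k" using i by (cases i) auto
  have "(\<Prod>m=1..i-1. a m ^ N) ^ (L1+1) = (\<Prod>m=1..k. a m ^ (N*(L1+1)))"
    by (subst prod_power_distrib) (simp only: power_mult[symmetric] k diff_Suc_1)
  also have "\<dots> \<le> (\<Prod>m=1..k. a m ^ (N*(L1+1)+L2))"
    by (intro prod_mono conjI power_increasing) (use a1 in \<open>auto intro: order_trans[OF zero_le_one]\<close>)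
  finally have A: "(\<Prod>m=1..i-1. a m ^ N) ^ (L1+1) \<le> (\<Prod>m=1..k. a m ^ (N*(L1+1)+L2))" .
  have B: "a i ^ L2 \<le> a i ^ (N*(L1+1)+L2)" by (rule power_increasing) (use a1 in auto)
  have "(\<Prod>m=1..i. a m ^ (N*(L1+1)+L2)) = (\<Prod>m=1..k. a m ^ (N*(L1+1)+L2)) * a i ^ (N*(L1+1)+L2)"
    by (simp add: k)
  moreover have "0 \<le> a i ^ L2" using a1[of i] by simp
  moreover have "0 \<le> (\<Prod>m=1..k. a m ^ (N*(L1+1)+L2))"
    using a1 by (intro prod_nonneg) (auto intro: order_trans[OF zero_le_one])
  ultimately show ?thesis using mult_mono[OF A B] by simp
qed

lemma poly_lemma:
  fixes zn yn D P M K2 K3 K4 K5 :: real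
  assumes "0 \<le> zn" "zn \<le> D * P" "0 \<le> yn" "yn \<le> M" "P \<ge> 1" "M \<ge> 1" "D \<ge> 0"
    and "K2 \<ge> 0" "K3 \<ge> 0" "K4 \<ge> 0" "K5 \<ge> 0"
  shows "K2 + K3 * zn ^ L1 + K4 * yn ^ L2 + K5 * zn ^ L1 * yn ^ L2
         \<le> (K2 + K3 * D ^ L1 + K4 + K5 * D ^ L1) * P ^ L1 * M ^ L2"
proof -
  define p where "p = P ^ L1"
  define q where "q = M ^ L2"
  define d where "d = D ^ L1"
  have p1: "p \<ge> 1" "q \<ge> 1" using assms by (simp_all add: p_def q_def one_le_power)
  have d0: "d \<ge> 0" using assms by (simp add: d_def)
  have za: "zn ^ L1 \<le> d * p" unfolding d_def p_def power_mult_distrib[symmetric]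
    by (rule power_mono) (use assms in auto)
  have yb: "yn ^ L2 \<le> q" unfolding q_def by (rule power_mono) (use assms in auto)
  have a0: "0 \<le> zn ^ L1" "0 \<le> yn ^ L2" using assms by simp_all
  have pq: "1 \<le> p * q" using p1 by (metis mult_mono order_trans zero_le_one mult_1)
  have "K2 \<le> K2 * (p * q)" using assms pq by (simp add: mult_le_cancel_left1)
  moreover have "K3 * zn ^ L1 \<le> K3 * d * (p * q)"
  proof -
    have "d * p \<le> d * p * q" using mult_left_mono[of 1 q "d*p"] d0 p1 by simp
    then have "zn ^ L1 \<le> d * (p * q)" using za by (simp add: mult.assoc)
    then show ?thesis using assms by (simp add: mult_left_mono mult.assoc)
  qed
  moreover have "K4 * yn ^ L2 \<le> K4 * (p * q)"
  proof -
    have "q \<le> p * q" using mult_right_mono[of 1 p q] p1 by simp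
    then have "yn ^ L2 \<le> p * q" using yb by simp
    then show ?thesis using assms by (simp add: mult_left_mono)
  qed
  moreover have "K5 * zn ^ L1 * yn ^ L2 \<le> K5 * d * (p * q)"
  proof -
    have "zn ^ L1 * yn ^ L2 \<le> (d * p) * q" using za yb a0 by (intro mult_mono) (auto intro: order_trans)
    then show ?thesis using assms by (simp add: mult_left_mono mult.assoc)
  qed
  ultimately have "K2 + K3 * zn ^ L1 + K4 * yn ^ L2 + K5 * zn ^ L1 * yn ^ L2
     \<le> K2 * (p * q) + K3 * d * (p * q) + K4 * (p * q) + K5 * d * (p * q)" by linarith
  also have "\<dots> = (K2 + K3 * d + K4 + K5 * d) * p * q" by (simp add: algebra_simps)
  finally show ?thesis by (simp add: p_def q_def d_def)
qed

lemma gronwall1: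
  fixes \<phi> h :: "real \<Rightarrow> 'a::banach" and \<phi>0 :: 'a
  assumes ab: "a \<le> b" "b - a \<le> 1" and K: "K \<ge> 0" and c: "c \<ge> 0"
    and hi: "\<And>t. t \<in> {a..b} \<Longrightarrow> (h has_integral (\<phi> t - \<phi>0)) {a..t}"
    and hb: "\<And>s. s \<in> {a..b} \<Longrightarrow> norm (h s) \<le> K * norm (\<phi> s) + c"
    and t: "t \<in> {a..b}"
  shows "norm (\<phi> t) \<le> (norm \<phi>0 + c) * exp K"
proof -
  have "norm (\<phi> t) \<le> (norm \<phi>0 + c * (b - a)) * exp (K * (t - a))"
    by (rule gronwall_int[OF ab(1) K c hi hb t])
  also have "\<dots> \<le> (norm \<phi>0 + c) * exp K"
  proof (rule mult_mono)
    show "norm \<phi>0 + c * (b - a) \<le> norm \<phi>0 + c"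
      using ab c mult_left_mono[of "b - a" 1 c] by simp
    have "K * (t - a) \<le> K * 1" using t ab K by (intro mult_left_mono) auto
    then show "exp (K * (t - a)) \<le> exp K" by simp
  qed (use c ab in auto)
  finally show ?thesis .
qed

theorem proposition10:
  fixes T L1 L2 :: nat
    and \<rho>max K1 K2 K3 K4 K5 \<tau> :: real
    and f :: "real^'nx \<Rightarrow> real^'m \<Rightarrow> real^'nx"
    and fx :: "real^'nx \<Rightarrow> real^'m \<Rightarrow> (real^'nx) \<Rightarrow>\<^sub>L (real^'nx)"
    and g :: "real^'nx \<Rightarrow> real^'ny \<Rightarrow> real^'nx"
    and gx :: "real^'nx \<Rightarrow> real^'ny \<Rightarrow> (real^'nx) \<Rightarrow>\<^sub>L (real^'nx)"
    and x0 :: "real^'nx" and v :: "real^'m"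
  assumes T_pos: "T \<ge> 1"
    and rho_pos: "\<rho>max > 0"
    and f_C1: "\<exists>Df :: (real^'nx) \<times> (real^'m) \<Rightarrow> ((real^'nx) \<times> (real^'m)) \<Rightarrow>\<^sub>L (real^'nx).
                 continuous_on UNIV Df \<and>
                 (\<forall>p. ((\<lambda>q. f (fst q) (snd q)) has_derivative blinfun_apply (Df p)) (at p))"
    and fx_deriv: "\<And>x u. ((\<lambda>x'. f x' u) has_derivative blinfun_apply (fx x u)) (at x)"
    and K1: "K1 \<ge> 1"
    and f_lip: "\<And>x' x'' u' u''. norm u' \<le> \<rho>max \<Longrightarrow> norm u'' \<le> \<rho>max \<Longrightarrow>
                 norm (f x' u' - f x'' u'') \<le> K1 * (norm (x' - x'') + norm (u' - u''))"
    and g_cont: "continuous_on UNIV (\<lambda>p. g (fst p) (snd p))"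
    and gx_deriv: "\<And>x y. ((\<lambda>x'. g x' y) has_derivative blinfun_apply (gx x y)) (at x)"
    and K_nonneg: "K2 \<ge> 0" "K3 \<ge> 0" "K4 \<ge> 0" "K5 \<ge> 0"
    and L_pos: "L1 \<ge> 1" "L2 \<ge> 1"
    and g_bound: "\<And>x y. norm (g x y) \<le> K2 + K3 * norm x ^ L1 + K4 * norm y ^ L2
                           + K5 * norm x ^ L1 * norm y ^ L2"
    and gx_bound: "\<And>x y. norm (gx x y) \<le> K2 + K3 * norm x ^ L1 + K4 * norm y ^ L2
                           + K5 * norm x ^ L1 * norm y ^ L2"
    and tau: "0 < \<tau>" "\<tau> < 1"
    and v_ball: "norm v \<le> \<rho>max"
  shows "\<exists>(\<L> :: nat \<Rightarrow> nat list set) (\<beta> :: nat \<Rightarrow> nat list \<Rightarrow> real).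
           (\<forall>i\<in>{2..T}. finite (\<L> i) \<and> (\<forall>js\<in>\<L> i. length js = i - 1 \<and> \<beta> i js > 0)) \<and>
           (\<forall>(u :: real \<Rightarrow> real^'m) (y :: nat \<Rightarrow> real^'ny) \<epsilon> xs Ps.
              admissible T \<rho>max u \<longrightarrow> continuous (at_left \<tau>) u \<longrightarrow>
              0 \<le> \<epsilon> \<longrightarrow> \<epsilon> < \<tau> \<longrightarrow>
              hybrid_traj T f g x0 y (pert_ctrl u v \<tau> \<epsilon>) xs \<longrightarrow>
              psi_sys T f fx gx y v \<tau> \<epsilon> (pert_ctrl u v \<tau> \<epsilon>) xs Ps \<longrightarrow>
              (\<forall>i\<in>{2..T}. \<forall>t\<in>{real i - 1..real i}.
                 norm (Ps i t) \<le> (\<Sum>js\<in>\<L> i. \<beta> i js * (\<Prod>m=1..i - 1. norm (y m) ^ (js ! (m - 1))))))"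
proof -
  define c0 where "c0 = norm (f 0 0) + K1 * \<rho>max"
  have K10: "K1 \<ge> 0" using K1 by simp
  have c00: "c0 \<ge> 0" using K10 rho_pos by (simp add: c0_def)
  have fb: "norm (f x u) \<le> K1 * norm x + c0" if "norm u \<le> \<rho>max" for x u
  proof -
    have "norm (f x u - f 0 0) \<le> K1 * (norm (x - 0) + norm (u - 0))"
      by (rule f_lip) (use that rho_pos in auto)
    then have "norm (f x u) \<le> norm (f 0 0) + K1 * (norm x + norm u)"
      using norm_triangle_ineq2[of "f x u" "f 0 0"] by simp
    also have "\<dots> \<le> norm (f 0 0) + K1 * (norm x + \<rho>max)" using that K10 by (simp add: mult_left_mono)
    finally show ?thesis by (simp add: c0_def algebra_simps)
  qed
  have fxb: "norm (fx x u) \<le> K1" if "norm u \<le> \<rho>max" for x u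
  proof (rule norm_blinfun_bound)
    show "0 \<le> K1" by (rule K10)
    fix h
    show "norm (blinfun_apply (fx x u) h) \<le> K1 * norm h"
    proof (rule deriv_lip_bound[OF fx_deriv])
      fix z show "norm (f z u - f x u) \<le> K1 * norm (z - x)" using f_lip[OF that that, of z x] by simp
    qed
  qed
  have wb: "norm (pert_ctrl u v \<tau> \<epsilon> s) \<le> \<rho>max"
    if "admissible T \<rho>max u" "s \<in> {0..real T}" for u :: "real \<Rightarrow> real^'m" and \<epsilon> s
    using that v_ball by (auto simp: pert_ctrl_def admissible_def)
  define Pr where "Pr = (\<lambda>(y::nat \<Rightarrow> real^'ny) (N::nat) (i::nat). \<Prod>m=1..i-1. max 1 (norm (y m)) ^ N)"
  have Pr1: "Pr y N i \<ge> 1" for y N i unfolding Pr_def by (intro prod_ge_1) (auto simp: one_le_power)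
  define Hyp where "Hyp = (\<lambda>(u::real \<Rightarrow> real^'m) (y::nat \<Rightarrow> real^'ny) (\<epsilon>::real)
     (xs::nat \<Rightarrow> real \<Rightarrow> real^'nx) (Ps::nat \<Rightarrow> real \<Rightarrow> real^'nx).
     admissible T \<rho>max u \<and> 0 \<le> \<epsilon> \<and> \<epsilon> < \<tau> \<and> hybrid_traj T f g x0 y (pert_ctrl u v \<tau> \<epsilon>) xs \<and>
     psi_sys T f fx gx y v \<tau> \<epsilon> (pert_ctrl u v \<tau> \<epsilon>) xs Ps)"
  have claim: "\<exists>C D N. C \<ge> 0 \<and> D \<ge> 0 \<and> (\<forall>u y \<epsilon> xs Ps. Hyp u y \<epsilon> xs Ps \<longrightarrow>
      norm (xs i (real i)) \<le> D * Pr y N i \<and>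
      (\<forall>t\<in>{real i - 1..real i}. (2 \<le> i \<or> \<tau> - \<epsilon> \<le> t) \<longrightarrow> norm (Ps i t) \<le> C * Pr y N i))"
    if "1 \<le> i" "i \<le> T" for i
    using that
  proof (induction i)
    case 0 then show ?case by simp
  next
    case (Suc i)
    show ?case
    proof (cases "i = 0")
      case True
      have main: "norm (xs 1 1) \<le> (norm x0 + c0) * exp K1 \<and>
          (\<forall>t\<in>{0..1}. \<tau> - \<epsilon> \<le> t \<longrightarrow> norm (Ps 1 t) \<le> (2 * K1 * \<rho>max) * exp K1)"
        if H: "Hyp u y \<epsilon> xs Ps" for u y \<epsilon> xs Ps
      proof -
        define w where "w = pert_ctrl u v \<tau> \<epsilon>"
        have adm: "admissible T \<rho>max u" and e0: "0 \<le> \<epsilon>" and et: "\<epsilon> < \<tau>"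
          and ht: "hybrid_traj T f g x0 y w xs" and ps: "psi_sys T f fx gx y v \<tau> \<epsilon> w xs Ps"
          using H by (auto simp: Hyp_def w_def)
        have wb': "norm (w s) \<le> \<rho>max" if "s \<in> {0..1}" for s
          unfolding w_def by (rule wb[OF adm]) (use that T_pos in auto)
        have one: "(1::nat) \<in> {1..T}" using T_pos by simp
        have h1: "\<And>t. t \<in> {0..1} \<Longrightarrow> ((\<lambda>s. f (xs 1 s) (w s)) has_integral (xs 1 t - x0)) {0..t}"
          using bspec[OF ht[unfolded hybrid_traj_def] one] by simp
        have X: "norm (xs 1 1) \<le> (norm x0 + c0) * exp K1"
          by (rule gronwall1[of 0 1 K1 c0 "\<lambda>s. f (xs 1 s) (w s)" "xs 1" x0]) 
             (use K10 c00 h1 fb wb' in auto)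
        have P: "norm (Ps 1 t) \<le> (2 * K1 * \<rho>max) * exp K1" if t: "t \<in> {0..1}" "\<tau> - \<epsilon> \<le> t" for t
        proof -
          define a where "a = \<tau> - \<epsilon>"
          have a: "0 < a" "a \<le> 1" using et tau e0 by (auto simp: a_def)
          have ps1: "\<And>t. t \<in> {a..1} \<Longrightarrow> ((\<lambda>s. fx (xs 1 s) (w s) (Ps 1 s)) has_integral
              (Ps 1 t - (f (xs 1 a) v - f (xs 1 a) (w a)))) {a..t}"
            using ps unfolding psi_sys_def a_def by blast
          have st: "norm (f (xs 1 a) v - f (xs 1 a) (w a)) \<le> 2 * K1 * \<rho>max"
          proof -
            have wa: "norm (w a) \<le> \<rho>max" using wb'[of a] a by auto
            have "norm (f (xs 1 a) v - f (xs 1 a) (w a)) \<le> K1 * (norm (xs 1 a - xs 1 a) + norm (v - w a))"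
              by (rule f_lip[OF v_ball wa])
            also have "\<dots> \<le> K1 * (2 * \<rho>max)"
              using norm_triangle_ineq4[of v "w a"] v_ball wa K10 by (intro mult_left_mono) auto
            finally show ?thesis by simp
          qed
          have hb: "norm (fx (xs 1 s) (w s) (Ps 1 s)) \<le> K1 * norm (Ps 1 s) + 0" if s: "s \<in> {a..1}" for s
          proof -
            have "norm (w s) \<le> \<rho>max" using wb'[of s] s a by auto
            then show ?thesis using norm_blinfun[of "fx (xs 1 s) (w s)" "Ps 1 s"] fxb[of "w s" "xs 1 s"]
              by (smt (verit, best) mult_right_mono norm_ge_zero)
          qed
          have "norm (Ps 1 t) \<le> (norm (f (xs 1 a) v - f (xs 1 a) (w a)) + 0) * exp K1"
            by (rule gronwall1[OF _ _ K10 _ ps1 hb]) (use a t a_def in auto)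
          also have "\<dots> \<le> (2 * K1 * \<rho>max) * exp K1" using st by simp
          finally show ?thesis .
        qed
        show ?thesis using X P by auto
      qed
      have C0: "2 * K1 * \<rho>max * exp K1 \<ge> 0" using K10 rho_pos by simp
      have D0: "(norm x0 + c0) * exp K1 \<ge> 0" using c00 by simp
      have Pr0: "Pr y 0 1 = 1" for y by (simp add: Pr_def)
      show ?thesis using True main C0 D0 Pr0
        by (intro exI[of _ "2 * K1 * \<rho>max * exp K1"] exI[of _ "(norm x0 + c0) * exp K1"] exI[of _ 0]) auto
    next
      case False
      then have i1: "1 \<le> i" and iT: "i \<le> T" using Suc.prems by auto
      obtain C D N where C0: "C \<ge> 0" and D0: "D \<ge> 0" and IH: "\<forall>u y \<epsilon> xs Ps. Hyp u y \<epsilon> xs Ps \<longrightarrow>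
        norm (xs i (real i)) \<le> D * Pr y N i \<and>
        (\<forall>t\<in>{real i - 1..real i}. (2 \<le> i \<or> \<tau> - \<epsilon> \<le> t) \<longrightarrow> norm (Ps i t) \<le> C * Pr y N i)"
        using Suc.IH[OF i1 iT] by blast
      define E where "E = K2 + K3 * D ^ L1 + K4 + K5 * D ^ L1"
      have E0: "E \<ge> 0" using K_nonneg D0 by (simp add: E_def)
      define N' where "N' = N * (L1 + 1) + L2"
      have main: "norm (xs (Suc i) (real (Suc i))) \<le> ((E + c0) * exp K1) * Pr y N' (Suc i) \<and>
          (\<forall>t\<in>{real (Suc i) - 1..real (Suc i)}. norm (Ps (Suc i) t) \<le> (E * C * exp K1) * Pr y N' (Suc i))"
        if H: "Hyp u y \<epsilon> xs Ps" for u y \<epsilon> xs Ps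
      proof -
        define w where "w = pert_ctrl u v \<tau> \<epsilon>"
        have adm: "admissible T \<rho>max u" and e0: "0 \<le> \<epsilon>" and et: "\<epsilon> < \<tau>"
          and ht: "hybrid_traj T f g x0 y w xs" and ps: "psi_sys T f fx gx y v \<tau> \<epsilon> w xs Ps"
          using H by (auto simp: Hyp_def w_def)
        have siT: "real i + 1 \<le> real T" using Suc.prems by simp
        have wb': "norm (w s) \<le> \<rho>max" if "s \<in> {real i..real i + 1}" for s
          unfolding w_def by (rule wb[OF adm]) (use that siT in auto)
        define P where "P = Pr y N i"
        define Q where "Q = Pr y N' (Suc i)"
        define Mi where "Mi = max 1 (norm (y i))"
        have P1: "P \<ge> 1" and Q1: "Q \<ge> 1" using Pr1 by (simp_all add: P_def Q_def)
        have Mi1: "Mi \<ge> 1" by (simp add: Mi_def)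
        have zb: "norm (xs i (real i)) \<le> D * P" using IH H by (simp add: P_def)
        have psb: "norm (Ps i (real i)) \<le> C * P"
        proof -
          have "\<tau> - \<epsilon> \<le> real i" using tau e0 i1 by simp
          then show ?thesis using IH H by (auto simp: P_def)
        qed
        have PQ: "P ^ (L1 + 1) * Mi ^ L2 \<le> Q"
          using prod_lemma[of "\<lambda>m. max 1 (norm (y m))" i N L1 L2] i1
          by (simp add: P_def Q_def Mi_def Pr_def N'_def)
        have PQ': "P ^ L1 * Mi ^ L2 \<le> Q"
        proof -
          have "P ^ L1 \<le> P ^ (L1 + 1)" using P1 by (intro power_increasing) auto
          then have "P ^ L1 * Mi ^ L2 \<le> P ^ (L1 + 1) * Mi ^ L2" using Mi1 by (intro mult_right_mono) auto
          then show ?thesis using PQ by simp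
        qed
        have pl: "K2 + K3 * norm (xs i (real i)) ^ L1 + K4 * norm (y i) ^ L2
               + K5 * norm (xs i (real i)) ^ L1 * norm (y i) ^ L2 \<le> E * P ^ L1 * Mi ^ L2"
          unfolding E_def by (rule poly_lemma) (use zb P1 Mi1 D0 K_nonneg in \<open>auto simp: Mi_def\<close>)
        have gb: "norm (g (xs i (real i)) (y i)) \<le> E * P ^ L1 * Mi ^ L2"
          using g_bound pl by (rule order_trans)
        have gxb: "norm (gx (xs i (real i)) (y i)) \<le> E * P ^ L1 * Mi ^ L2"
          using gx_bound pl by (rule order_trans)
        have si: "Suc i \<in> {1..T}" using Suc.prems by simp
        have h1: "\<And>t. t \<in> {real i..real i + 1} \<Longrightarrow> ((\<lambda>s. f (xs (Suc i) s) (w s)) has_integral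
            (xs (Suc i) t - g (xs i (real i)) (y i))) {real i..t}"
          using bspec[OF ht[unfolded hybrid_traj_def] si] False by (simp add: algebra_simps)
        have X: "norm (xs (Suc i) (real (Suc i))) \<le> (norm (g (xs i (real i)) (y i)) + c0) * exp K1"
          by (rule gronwall1[of "real i" "real i + 1" K1 c0 "\<lambda>s. f (xs (Suc i) s) (w s)" "xs (Suc i)"])
             (use K10 c00 h1 fb wb' in auto)
        also have "\<dots> \<le> ((E + c0) * exp K1) * Q"
        proof -
          have "E * P ^ L1 * Mi ^ L2 \<le> E * Q" using PQ' E0 mult_left_mono[OF PQ' E0] by (simp add: mult.assoc)
          moreover have "c0 \<le> c0 * Q" using c00 Q1 mult_left_mono[of 1 Q c0] by simp
          ultimately have "norm (g (xs i (real i)) (y i)) + c0 \<le> (E + c0) * Q" using gb by (simp add: algebra_simps)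
          then show ?thesis by (simp add: mult.commute mult.left_commute)
        qed
        finally have X': "norm (xs (Suc i) (real (Suc i))) \<le> ((E + c0) * exp K1) * Q" .
        have si2: "Suc i \<in> {2..T}" using Suc.prems i1 by simp
        have p1: "\<And>t. t \<in> {real i..real i + 1} \<Longrightarrow> ((\<lambda>s. fx (xs (Suc i) s) (w s) (Ps (Suc i) s)) has_integral
            (Ps (Suc i) t - gx (xs i (real i)) (y i) (Ps i (real i)))) {real i..t}"
          using bspec[OF conjunct2[OF ps[unfolded psi_sys_def]] si2] by (simp add: algebra_simps)
        have st: "norm (gx (xs i (real i)) (y i) (Ps i (real i))) \<le> E * C * Q"
        proof -
          have "norm (gx (xs i (real i)) (y i) (Ps i (real i))) \<le> norm (gx (xs i (real i)) (y i)) * norm (Ps i (real i))"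
            by (rule norm_blinfun)
          also have "\<dots> \<le> (E * P ^ L1 * Mi ^ L2) * (C * P)"
            by (rule mult_mono[OF gxb psb]) (use E0 P1 Mi1 in auto)
          also have "\<dots> = E * C * (P ^ (L1 + 1) * Mi ^ L2)" by (simp add: algebra_simps)
          also have "\<dots> \<le> E * C * Q" using PQ E0 C0 by (intro mult_left_mono) auto
          finally show ?thesis .
        qed
        have hb: "norm (fx (xs (Suc i) s) (w s) (Ps (Suc i) s)) \<le> K1 * norm (Ps (Suc i) s) + 0"
          if s: "s \<in> {real i..real i + 1}" for s
          using norm_blinfun[of "fx (xs (Suc i) s) (w s)" "Ps (Suc i) s"] fxb[OF wb'[OF s], of "xs (Suc i) s"]
          by (smt (verit, best) mult_right_mono norm_ge_zero)
        have PP: "norm (Ps (Suc i) t) \<le> (E * C * exp K1) * Q" if t: "t \<in> {real (Suc i) - 1..real (Suc i)}" for t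
        proof -
          have "norm (Ps (Suc i) t) \<le> (norm (gx (xs i (real i)) (y i) (Ps i (real i))) + 0) * exp K1"
            by (rule gronwall1[OF _ _ K10 _ p1 hb]) (use t in auto)
          also have "\<dots> \<le> (E * C * Q) * exp K1" using st by simp
          finally show ?thesis by (simp add: algebra_simps)
        qed
        show ?thesis using X' PP by (simp add: Q_def)
      qed
      have CC: "E * C * exp K1 \<ge> 0" using E0 C0 by simp
      have DD: "(E + c0) * exp K1 \<ge> 0" using E0 c00 by simp
      show ?thesis using main CC DD
        by (intro exI[of _ "E * C * exp K1"] exI[of _ "(E + c0) * exp K1"] exI[of _ N']) auto
    qed
  qed
  have ex: "\<forall>i. \<exists>p::real \<times> nat. (2 \<le> i \<and> i \<le> T) \<longrightarrow> fst p \<ge> 0 \<and> (\<forall>u y \<epsilon> xs Ps. Hyp u y \<epsilon> xs Ps \<longrightarrow>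
      (\<forall>t\<in>{real i - 1..real i}. norm (Ps i t) \<le> fst p * Pr y (snd p) i))"
  proof
    fix i
    show "\<exists>p::real \<times> nat. (2 \<le> i \<and> i \<le> T) \<longrightarrow> fst p \<ge> 0 \<and> (\<forall>u y \<epsilon> xs Ps. Hyp u y \<epsilon> xs Ps \<longrightarrow>
      (\<forall>t\<in>{real i - 1..real i}. norm (Ps i t) \<le> fst p * Pr y (snd p) i))"
    proof (cases "2 \<le> i \<and> i \<le> T")
      case True
      then obtain C D N where "C \<ge> 0" and "\<forall>u y \<epsilon> xs Ps. Hyp u y \<epsilon> xs Ps \<longrightarrow>
        norm (xs i (real i)) \<le> D * Pr y N i \<and>
        (\<forall>t\<in>{real i - 1..real i}. (2 \<le> i \<or> \<tau> - \<epsilon> \<le> t) \<longrightarrow> norm (Ps i t) \<le> C * Pr y N i)"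
        using claim[of i] by auto
      then show ?thesis using True by (intro exI[of _ "(C, N)"]) auto
    qed auto
  qed
  obtain F where F: "\<forall>i. (2 \<le> i \<and> i \<le> T) \<longrightarrow> fst (F i) \<ge> 0 \<and> (\<forall>u y \<epsilon> xs Ps. Hyp u y \<epsilon> xs Ps \<longrightarrow>
      (\<forall>t\<in>{real i - 1..real i}. norm (Ps i t) \<le> fst (F i) * Pr y (snd (F i)) i))"
    using choice[OF ex] by blast
  define LL where "LL = (\<lambda>i::nat. {js::nat list. set js \<subseteq> {0, snd (F i)} \<and> length js = i - 1})"
  define BB where "BB = (\<lambda>(i::nat) (js::nat list). fst (F i) + 1)"
  have part1: "\<forall>i\<in>{2..T}. finite (LL i) \<and> (\<forall>js\<in>LL i. length js = i - 1 \<and> BB i js > 0)"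
  proof
    fix i assume i: "i \<in> {2..T}"
    have "fst (F i) \<ge> 0" using F i by auto
    then show "finite (LL i) \<and> (\<forall>js\<in>LL i. length js = i - 1 \<and> BB i js > 0)"
      unfolding LL_def BB_def using finite_lists_length_eq[of "{0, snd (F i)}" "i - 1"] by auto
  qed
  have part2: "norm (Ps i t) \<le> (\<Sum>js\<in>LL i. BB i js * (\<Prod>m=1..i - 1. norm (y m) ^ (js ! (m - 1))))"
    if H: "Hyp u y \<epsilon> xs Ps" and i: "i \<in> {2..T}" and t: "t \<in> {real i - 1..real i}" for u y \<epsilon> xs Ps i t
  proof -
    define C where "C = fst (F i)"
    define N where "N = snd (F i)"
    have C0: "C \<ge> 0" and b: "norm (Ps i t) \<le> C * Pr y N i"
      using F i H t by (auto simp: C_def N_def)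
    define js0 where "js0 = map (\<lambda>m. if 1 \<le> norm (y (Suc m)) then N else 0) [0..<i-1]"
    have js0: "js0 \<in> LL i" by (auto simp: LL_def js0_def N_def)
    have prodeq: "Pr y N i = (\<Prod>m=1..i - 1. norm (y m) ^ (js0 ! (m - 1)))"
      unfolding Pr_def
    proof (rule prod.cong[OF refl])
      fix m assume m: "m \<in> {1..i - 1}"
      then have "js0 ! (m - 1) = (if 1 \<le> norm (y m) then N else 0)"
        by (auto simp: js0_def)
      then show "max 1 (norm (y m)) ^ N = norm (y m) ^ (js0 ! (m - 1))"
        by (auto simp: max_def)
    qed
    have "norm (Ps i t) \<le> (C + 1) * Pr y N i" using b Pr1[of y N i] by (simp add: algebra_simps)
    also have "\<dots> = BB i js0 * (\<Prod>m=1..i - 1. norm (y m) ^ (js0 ! (m - 1)))"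
      by (simp add: BB_def C_def prodeq)
    also have "\<dots> \<le> (\<Sum>js\<in>LL i. BB i js * (\<Prod>m=1..i - 1. norm (y m) ^ (js ! (m - 1))))"
    proof (rule member_le_sum[OF js0])
      show "finite (LL i)" using part1 i by auto
      fix js assume "js \<in> LL i - {js0}"
      show "0 \<le> BB i js * (\<Prod>m=1..i - 1. norm (y m) ^ (js ! (m - 1)))"
        using F i by (auto simp: BB_def intro!: mult_nonneg_nonneg prod_nonneg)
    qed
    finally show ?thesis .
  qed
  show ?thesis
    apply (rule exI[of _ LL], rule exI[of _ BB])
    using part1 part2 by (auto simp: Hyp_def)
qed

end
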